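(* There exists a universal $\varepsilon_1>0$ such that for every $0<\varepsilon\le\varepsilon_1$ the following holds. Let $\mathbf{u}=(u^1,\dots,u^m)$ be a viscosity solution to $\Delta\mathbf{u}=|\mathbf{u}|^{p-2}\mathbf{u}$ in $B_1$ such that $$|\mathbf{u}-f^1u_0(x_n)|\le\varepsilon\ \text{in } B_1\qquad\text{and}\qquad |\mathbf{u}|\equiv0\ \text{in } B_1\cap\{x_n<-\varepsilon\}.$$ Then $$|\mathbf{u}|\le u_0\!\left(x_n+\varepsilon^{\frac1{2\kappa}}\right)\ \text{in } B_1\qquad\text{and}\qquad u_0\!\left(x_n-\varepsilon^{\frac1{2\kappa}}\right)\le u^1\ \text{in } B_1\cap\left\{x_n\ge\varepsilon^{\frac1{2\kappa}}\right\}.$$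
   Context: Fix integers $n\ge 2$, $m\ge 1$ and $0<p<1$; universal means depending only on $n,m,p$. Set $\kappa:=\frac{2}{2-p}$, $c_p:=[\kappa(\kappa-1)]^{\frac{1}{p-2}}$, $u_0(t):=c_p(\max\{t,0\})^\kappa$. $f^1$ is the first standard basis vector of $\mathbb{R}^m$. For $\mathbf{u}\in C(\Omega;\mathbb{R}^m)$, $\Omega(\mathbf{u}):=\Omega\cap\{|\mathbf{u}|>0\}$, $\Gamma(\mathbf{u}):=\Omega\cap\partial\Omega(\mathbf{u})$. Viscosity solution: $\mathbf{u}\in C(\Omega;\mathbb{R}^m)$ is a viscosity solution of $\Delta\mathbf{u}=|\mathbf{u}|^{p-2}\mathbf{u}$ in $\Omega$ if (i) $\Delta u^i=|\mathbf{u}|^{p-2}u^i$ in $\Omega(\mathbf{u})$ for all $i$, and (ii) for every $x_0\in\Gamma(\mathbf{u})$ and every $f\in\mathbb{R}^m$, $\langle\mathbf{u},f\rangle$ cannot be touched from below at $x_0$ by a function $\varphi\in C^1$ with $\varphi(x_0)=0$, $|\nabla\varphi(x_0)|\ne0$, such that on $\{\varphi\ne0\}$, $\varphi\in C^2$ and $\Delta\varphi>\varphi^{p-1}\chi_{\{\varphi>0\}}$. *)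

theory Defs
  imports "HOL-Analysis.Analysis"
begin

definition kappa :: "real \<Rightarrow> real" where
  "kappa p = 2 / (2 - p)"

definition c_p :: "real \<Rightarrow> real" where
  "c_p p = (kappa p * (kappa p - 1)) powr (1 / (p - 2))"

definition u0 :: "real \<Rightarrow> real \<Rightarrow> real" where
  "u0 p t = c_p p * (max t 0) powr (kappa p)"

definition C1_grad_on :: "(real^'n) set \<Rightarrow> (real^'n \<Rightarrow> real) \<Rightarrow> (real^'n \<Rightarrow> real^'n) \<Rightarrow> bool" where
  "C1_grad_on S f Df \<longleftrightarrow>
     (\<forall>x\<in>S. (f has_derivative (\<lambda>h. Df x \<bullet> h)) (at x)) \<and> continuous_on S Df"

definition C2_on :: "(real^'n) set \<Rightarrow> (real^'n \<Rightarrow> real) \<Rightarrow> bool" where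
  "C2_on S f \<longleftrightarrow> (\<exists>Df D2f.
     (\<forall>x\<in>S. (f has_derivative (\<lambda>h. Df x \<bullet> h)) (at x)) \<and>
     (\<forall>x\<in>S. (Df has_derivative (\<lambda>h. D2f x *v h)) (at x)) \<and>
     continuous_on S (D2f :: real^'n \<Rightarrow> real^'n^'n))"

definition laplacian :: "(real^'n \<Rightarrow> real) \<Rightarrow> real^'n \<Rightarrow> real" where
  "laplacian f x = (\<Sum>i\<in>UNIV.
     deriv (\<lambda>s. deriv (\<lambda>t. f (x + t *\<^sub>R axis i 1)) s) 0)"

definition posset :: "(real^'n) set \<Rightarrow> (real^'n \<Rightarrow> real^'m) \<Rightarrow> (real^'n) set" where
  "posset \<Omega> u = \<Omega> \<inter> {x. norm (u x) > 0}"

definition free_bdry :: "(real^'n) set \<Rightarrow> (real^'n \<Rightarrow> real^'m) \<Rightarrow> (real^'n) set" where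
  "free_bdry \<Omega> u = \<Omega> \<inter> frontier (posset \<Omega> u)"

definition visc_sol :: "real \<Rightarrow> (real^'n) set \<Rightarrow> (real^'n \<Rightarrow> real^'m) \<Rightarrow> bool" where
  "visc_sol p \<Omega> u \<longleftrightarrow>
     continuous_on \<Omega> u \<and>
     (\<forall>i. C2_on (posset \<Omega> u) (\<lambda>x. u x $ i) \<and>
          (\<forall>x\<in>posset \<Omega> u.
             laplacian (\<lambda>y. u y $ i) x = norm (u x) powr (p - 2) * u x $ i)) \<and>
     (\<forall>x0\<in>free_bdry \<Omega> u. \<forall>f::real^'m.
        \<not> (\<exists>r>0. \<exists>\<phi> D\<phi>. ball x0 r \<subseteq> \<Omega> \<and>
              C1_grad_on (ball x0 r) \<phi> D\<phi> \<and> \<phi> x0 = 0 \<and> D\<phi> x0 \<noteq> 0 \<and>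
              C2_on (ball x0 r \<inter> {x. \<phi> x \<noteq> 0}) \<phi> \<and>
              (\<forall>x\<in>ball x0 r \<inter> {x. \<phi> x \<noteq> 0}.
                 laplacian \<phi> x > (if \<phi> x > 0 then \<phi> x powr (p - 1) else 0)) \<and>
              (\<forall>x\<in>ball x0 r. \<phi> x \<le> u x \<bullet> f)))"

end

theory Submission
  imports Defs
begin

lemma super_powr:
  fixes x d k :: real
  assumes "1 \<le> k" "0 \<le> x" "0 \<le> d"
  shows "x powr k + d powr k \<le> (x + d) powr k"
proof (cases "x = 0 \<or> d = 0")
  case True then show ?thesis using assms by auto
next
  case False
  then have xp: "0 < x" and dp: "0 < d" using assms by auto
  have e1: "x powr k = x * x powr (k - 1)" using xp by (simp add: powr_mult_base)
  have e2: "d powr k = d * d powr (k - 1)" using dp by (simp add: powr_mult_base)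
  have e3: "(x + d) powr k = (x + d) * (x + d) powr (k - 1)" using xp dp by (simp add: powr_mult_base)
  have m1: "x powr (k - 1) \<le> (x + d) powr (k - 1)" using assms xp dp by (intro powr_mono2) auto
  have m2: "d powr (k - 1) \<le> (x + d) powr (k - 1)" using assms xp dp by (intro powr_mono2) auto
  have "x * x powr (k - 1) + d * d powr (k - 1) \<le> x * (x + d) powr (k - 1) + d * (x + d) powr (k - 1)"
    using m1 m2 xp dp by (intro add_mono mult_left_mono) auto
  also have "\<dots> = (x + d) * (x + d) powr (k - 1)" by (simp add: algebra_simps)
  finally show ?thesis using e1 e2 e3 by simp
qed

lemma kappa_props:
  assumes "0 < p" "p < 1"
  shows "1 < kappa p" "0 < c_p p"
proof -
  show k1: "1 < kappa p" using assms by (simp add: kappa_def field_simps)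
  have "0 < kappa p * (kappa p - 1)" using k1 by simp
  then show "0 < c_p p" using k1 by (simp add: c_p_def)
qed

lemma u0_nonneg: "0 < p \<Longrightarrow> p < 1 \<Longrightarrow> 0 \<le> u0 p t"
  using kappa_props[of p] by (simp add: u0_def)

lemma key:
  fixes p eps :: real
  defines "\<delta> \<equiv> eps powr (1 / (2 * kappa p))"
  assumes p: "0 < p" "p < 1" and e: "0 < eps" "eps \<le> min (1/4) ((c_p p / 2 powr kappa p)^2)"
  shows "2 * eps \<le> \<delta>" "eps \<le> c_p p * (\<delta>/2) powr kappa p" "eps \<le> c_p p * \<delta> powr kappa p"
proof -
  note kp = kappa_props[OF p]
  have "sqrt eps \<le> sqrt (1/4)" using e by (intro real_sqrt_le_mono) simp
  moreover have "sqrt (1/4::real) = 1/2" by (simp add: real_sqrt_divide)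
  ultimately have se: "sqrt eps \<le> 1/2" by simp
  have ex: "1 / (2 * kappa p) \<le> 1/2" using kp by (simp add: field_simps)
  have "sqrt eps = eps powr (1/2)" using e by (simp add: powr_half_sqrt)
  also have "\<dots> \<le> \<delta>" unfolding \<delta>_def using e ex by (intro powr_mono') auto
  finally have sd: "sqrt eps \<le> \<delta>" .
  have "2 * eps = 2 * sqrt eps * sqrt eps" using e by simp
  also have "\<dots> \<le> 2 * (1/2) * sqrt eps" using se e by (intro mult_right_mono mult_left_mono) auto
  also have "\<dots> = sqrt eps" by simp
  finally show d1: "2 * eps \<le> \<delta>" using sd by linarith
  have dk: "\<delta> powr kappa p = sqrt eps"
  proof -
    have "(eps powr (1 / (2 * kappa p))) powr kappa p = eps powr (1 / (2 * kappa p) * kappa p)"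
      by (simp add: powr_powr)
    also have "1 / (2 * kappa p) * kappa p = 1/2" using kp by (simp add: field_simps)
    finally show ?thesis using e by (simp add: powr_half_sqrt \<delta>_def)
  qed
  have dk2: "(\<delta>/2) powr kappa p = sqrt eps / 2 powr kappa p"
  proof -
    have "0 \<le> \<delta>" unfolding \<delta>_def by simp
    then show ?thesis using dk by (simp add: powr_divide)
  qed
  have "sqrt eps \<le> sqrt ((c_p p / 2 powr kappa p)^2)" using e by (intro real_sqrt_le_mono) simp
  then have c: "sqrt eps \<le> c_p p / 2 powr kappa p" using kp by simp
  have "eps = sqrt eps * sqrt eps" using e by simp
  also have "\<dots> \<le> (c_p p / 2 powr kappa p) * sqrt eps" using c e by (intro mult_right_mono) auto
  also have "\<dots> = c_p p * (\<delta>/2) powr kappa p" using dk2 by simp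
  finally show e2: "eps \<le> c_p p * (\<delta>/2) powr kappa p" .
  have "(\<delta>/2) powr kappa p \<le> \<delta> powr kappa p" using d1 e kp by (intro powr_mono2) auto
  then show "eps \<le> c_p p * \<delta> powr kappa p" using e2 kp by (meson mult_left_mono less_imp_le order_trans)
qed

theorem lemma4p2:
  fixes p :: real
  assumes "CARD('n) \<ge> 2" and "0 < p" and "p < 1"
  shows "\<exists>\<epsilon>1>0. \<forall>\<epsilon>. 0 < \<epsilon> \<and> \<epsilon> \<le> \<epsilon>1 \<longrightarrow>
    (\<forall>(k::'n) (j::'m) (u :: real^'n \<Rightarrow> real^'m).
       visc_sol p (ball 0 1) u \<and>
       (\<forall>x\<in>ball 0 1. norm (u x - u0 p (x $ k) *\<^sub>R axis j 1) \<le> \<epsilon>) \<and>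
       (\<forall>x\<in>ball 0 1. x $ k < - \<epsilon> \<longrightarrow> norm (u x) = 0)
       \<longrightarrow>
       (\<forall>x\<in>ball 0 1. norm (u x) \<le> u0 p (x $ k + \<epsilon> powr (1 / (2 * kappa p)))) \<and>
       (\<forall>x\<in>ball 0 1. x $ k \<ge> \<epsilon> powr (1 / (2 * kappa p)) \<longrightarrow>
          u0 p (x $ k - \<epsilon> powr (1 / (2 * kappa p))) \<le> u x $ j))"
proof -
  note kp = kappa_props[OF assms(2,3)]
  define E where "E = min (1/4) ((c_p p / 2 powr kappa p)^2)"
  have E0: "0 < E" using kp by (simp add: E_def)
  show ?thesis
  proof (intro exI[of _ E] conjI E0 allI impI ballI)
    fix eps :: real and k :: 'n and j :: 'm and u :: "real^'n \<Rightarrow> real^'m" and x :: "real^'n"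
    assume e: "0 < eps \<and> eps \<le> E"
      and H: "visc_sol p (ball 0 1) u \<and>
       (\<forall>x\<in>ball 0 1. norm (u x - u0 p (x $ k) *\<^sub>R axis j 1) \<le> eps) \<and>
       (\<forall>x\<in>ball 0 1. x $ k < - eps \<longrightarrow> norm (u x) = 0)"
      and x: "x \<in> ball 0 1"
    define d where "d = eps powr (1 / (2 * kappa p))"
    have K: "2 * eps \<le> d" "eps \<le> c_p p * (d/2) powr kappa p" "eps \<le> c_p p * d powr kappa p"
      using key[OF assms(2,3), of eps] e unfolding d_def E_def by auto
    have cl: "norm (u x - u0 p (x $ k) *\<^sub>R axis j 1) \<le> eps" using H x by auto
    have u0n: "\<And>t. 0 \<le> u0 p t" using u0_nonneg assms by auto
    have nb: "norm (u x) \<le> u0 p (x $ k) + eps"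
    proof -
      have "norm (u x) \<le> norm (u0 p (x $ k) *\<^sub>R axis j (1::real)) + norm (u x - u0 p (x $ k) *\<^sub>R axis j 1)"
        using norm_triangle_ineq[of "u0 p (x $ k) *\<^sub>R axis j (1::real)" "u x - u0 p (x $ k) *\<^sub>R axis j 1"] by simp
      then show ?thesis using cl u0n[of "x$k"] by simp
    qed
    have sup: "\<And>a b. 0 \<le> a \<Longrightarrow> 0 \<le> b \<Longrightarrow> u0 p a + u0 p b \<le> u0 p (a + b)"
    proof -
      fix a b :: real assume "0 \<le> a" "0 \<le> b"
      then show "u0 p a + u0 p b \<le> u0 p (a + b)"
        using super_powr[of "kappa p" a b] kp unfolding u0_def
        by (simp add: distrib_left[symmetric])
    qed
    show "norm (u x) \<le> u0 p (x $ k + eps powr (1 / (2 * kappa p)))"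
    proof (cases "x $ k < - eps")
      case True then show ?thesis using H x u0n by auto
    next
      case F: False
      show ?thesis
      proof (cases "0 \<le> x $ k")
        case True
        have "u0 p d = c_p p * d powr kappa p" using e by (simp add: u0_def d_def)
        then have "eps \<le> u0 p d" using K by simp
        then have "norm (u x) \<le> u0 p (x $ k) + u0 p d" using nb by simp
        also have "\<dots> \<le> u0 p (x $ k + d)" using sup True e by (simp add: d_def)
        finally show ?thesis by (simp add: d_def)
      next
        case False
        then have "u0 p (x $ k) = 0" by (simp add: u0_def)
        then have n: "norm (u x) \<le> eps" using nb by simp
        have "d/2 \<le> x $ k + d" using F K by simp
        moreover have "0 \<le> d/2" using K e by simp
        ultimately have "(d/2) powr kappa p \<le> (x $ k + d) powr kappa p" by (intro powr_mono2) (use kp in auto)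
        then have "c_p p * (d/2) powr kappa p \<le> u0 p (x $ k + d)"
          using \<open>0 \<le> d/2\<close> \<open>d/2 \<le> x $ k + d\<close> kp by (simp add: u0_def)
        then show ?thesis using n K by (simp add: d_def)
      qed
    qed
  next
    fix eps :: real and k :: 'n and j :: 'm and u :: "real^'n \<Rightarrow> real^'m" and x :: "real^'n"
    assume e: "0 < eps \<and> eps \<le> E"
      and H: "visc_sol p (ball 0 1) u \<and>
       (\<forall>x\<in>ball 0 1. norm (u x - u0 p (x $ k) *\<^sub>R axis j 1) \<le> eps) \<and>
       (\<forall>x\<in>ball 0 1. x $ k < - eps \<longrightarrow> norm (u x) = 0)"
      and x: "x \<in> ball 0 1" and xk: "eps powr (1 / (2 * kappa p)) \<le> x $ k"
    define d where "d = eps powr (1 / (2 * kappa p))"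
    have K: "2 * eps \<le> d" "eps \<le> c_p p * (d/2) powr kappa p" "eps \<le> c_p p * d powr kappa p"
      using key[OF assms(2,3), of eps] e unfolding d_def E_def by auto
    have cl: "norm (u x - u0 p (x $ k) *\<^sub>R axis j 1) \<le> eps" using H x by auto
    have "\<bar>(u x - u0 p (x $ k) *\<^sub>R axis j 1) $ j\<bar> \<le> norm (u x - u0 p (x $ k) *\<^sub>R axis j 1)"
      by (rule component_le_norm_cart)
    then have lb: "u0 p (x $ k) - eps \<le> u x $ j" using cl by (simp add: axis_def)
    have sup: "\<And>a b. 0 \<le> a \<Longrightarrow> 0 \<le> b \<Longrightarrow> u0 p a + u0 p b \<le> u0 p (a + b)"
    proof -
      fix a b :: real assume "0 \<le> a" "0 \<le> b"
      then show "u0 p a + u0 p b \<le> u0 p (a + b)"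
        using super_powr[of "kappa p" a b] kp unfolding u0_def
        by (simp add: distrib_left[symmetric])
    qed
    have "u0 p d = c_p p * d powr kappa p" using e by (simp add: u0_def d_def)
    then have "eps \<le> u0 p d" using K by simp
    moreover have "u0 p (x $ k - d) + u0 p d \<le> u0 p (x $ k)"
      using sup[of "x $ k - d" d] xk e unfolding d_def by simp
    ultimately show "u0 p (x $ k - eps powr (1 / (2 * kappa p))) \<le> u x $ j"
      using lb unfolding d_def by linarith
  qed
qed

end
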